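(* Let $r\ge0$ and let $Q_i,P_i\in\mathfrak{gl}_m$, $i=0,\dots,r$, be canonical coordinates with Poisson brackets $\{P_i\overset{\otimes}{,}Q_j\}=\delta_{ij}\Pi$, $\{P_i\overset{\otimes}{,}P_j\}=\{Q_i\overset{\otimes}{,}Q_j\}=0$. Define $A_k=\sum_{i=0}^{r-k}Q_iP_{i+k}$ for $k=0,\dots,r$. Then $$\{A_k\overset{\otimes}{,}A_l\}=\begin{cases}-[\Pi,A_{k+l}\otimes\mathbb I],&k+l\le r,\\0,&k+l>r.\end{cases}$$
   Context: $\{X\overset{\otimes}{,}Y\}=\sum_{a,b,c,d}\{X_{ab},Y_{cd}\}E_{ab}\otimes E_{cd}$, $\Pi=\sum_{a,b}E_{ab}\otimes E_{ba}$ (permutation operator). The resulting bracket is the standard Lie–Poisson bracket on the dual of the Takiff algebra $\mathfrak{gl}_m[z]/z^{r+1}$, for elements $\sum_kA_kz^{-k-1}$. *)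

theory Defs
  imports Main
begin

definition is_poisson_bracket :: "('a::comm_ring_1 \<Rightarrow> 'a \<Rightarrow> 'a) \<Rightarrow> bool" where
  "is_poisson_bracket br \<longleftrightarrow>
     (\<forall>x y z. br (x + y) z = br x z + br y z) \<and>
     (\<forall>x y. br x y = - br y x) \<and>
     (\<forall>x y z. br x (y * z) = br x y * z + y * br x z) \<and>
     (\<forall>x y z. br x (br y z) + br y (br z x) + br z (br x y) = 0)"

text \<open>m x m matrices with entries in the Poisson algebra: functions of (row, column),
indices < m.  Elements of gl_m (x) gl_m: T a b c d is the coefficient of
E_ab (x) E_cd.\<close>

type_synonym 'a mat = "nat \<Rightarrow> nat \<Rightarrow> 'a"
type_synonym 'a tens = "nat \<Rightarrow> nat \<Rightarrow> nat \<Rightarrow> nat \<Rightarrow> 'a"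

definition mat_mult :: "nat \<Rightarrow> 'a::comm_ring_1 mat \<Rightarrow> 'a mat \<Rightarrow> 'a mat" where
  "mat_mult m X Y = (\<lambda>a b. \<Sum>e<m. X a e * Y e b)"

definition mat_id :: "'a::comm_ring_1 mat" where
  "mat_id = (\<lambda>a b. if a = b then 1 else 0)"

definition tens_bracket :: "('a \<Rightarrow> 'a \<Rightarrow> 'a) \<Rightarrow> 'a mat \<Rightarrow> 'a mat \<Rightarrow> 'a tens" where
  "tens_bracket br X Y = (\<lambda>a b c d. br (X a b) (Y c d))"

definition tens_prod :: "'a::comm_ring_1 mat \<Rightarrow> 'a mat \<Rightarrow> 'a tens" where
  "tens_prod X Y = (\<lambda>a b c d. X a b * Y c d)"

definition perm_op :: "'a::comm_ring_1 tens" where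
  "perm_op = (\<lambda>a b c d. if c = b \<and> d = a then 1 else 0)"

text \<open>Product in the algebra gl_m (x) gl_m: (E_ab(x)E_cd)(E_ef(x)E_gh) = d_be d_dg E_af (x) E_ch.\<close>
definition tens_mult :: "nat \<Rightarrow> 'a::comm_ring_1 tens \<Rightarrow> 'a tens \<Rightarrow> 'a tens" where
  "tens_mult m S T = (\<lambda>a b c d. \<Sum>e<m. \<Sum>f<m. S a e c f * T e b f d)"

definition tens_comm :: "nat \<Rightarrow> 'a::comm_ring_1 tens \<Rightarrow> 'a tens \<Rightarrow> 'a tens" where
  "tens_comm m S T = (\<lambda>a b c d. tens_mult m S T a b c d - tens_mult m T S a b c d)"

definition tens_eq :: "nat \<Rightarrow> 'a tens \<Rightarrow> 'a tens \<Rightarrow> bool" where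
  "tens_eq m S T \<longleftrightarrow> (\<forall>a<m. \<forall>b<m. \<forall>c<m. \<forall>d<m. S a b c d = T a b c d)"

definition A_mat :: "nat \<Rightarrow> nat \<Rightarrow> (nat \<Rightarrow> 'a::comm_ring_1 mat) \<Rightarrow> (nat \<Rightarrow> 'a mat) \<Rightarrow> nat \<Rightarrow> 'a mat" where
  "A_mat m r Q P k = (\<lambda>a b. \<Sum>i=0..r-k. mat_mult m (Q i) (P (i + k)) a b)"

end

theory Submission
  imports Defs
begin

locale pbr =
  fixes br :: "'a::comm_ring_1 \<Rightarrow> 'a \<Rightarrow> 'a"
  assumes pb: "is_poisson_bracket br"
begin

lemma addL: "br (x + y) z = br x z + br y z"
  using pb unfolding is_poisson_bracket_def by blast

lemma antisym: "br x y = - br y x"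
  using pb unfolding is_poisson_bracket_def by blast

lemma leib: "br x (y * z) = br x y * z + y * br x z"
  using pb unfolding is_poisson_bracket_def by blast

lemma addR: "br x (y + z) = br x y + br x z"
  by (metis addL antisym minus_add_distrib)

lemma zeroL: "br 0 y = 0"
  using addL[of 0 0 y] by simp

lemma zeroR: "br x 0 = 0"
  using addR[of x 0 0] by simp

lemma sumL: "br (sum f S) y = (\<Sum>i\<in>S. br (f i) y)"
  using sum_comp_morphism[of "\<lambda>x. br x y" f S] zeroL addL by (simp add: o_def)

lemma sumR: "br y (sum f S) = (\<Sum>i\<in>S. br y (f i))"
  using sum_comp_morphism[of "\<lambda>x. br y x" f S] zeroR addR by (simp add: o_def)

lemma leibL: "br (x * y) z = x * br y z + br x z * y"
proof -
  have "br (x * y) z = - br z (x * y)" by (rule antisym)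
  also have "\<dots> = - (br z x * y + x * br z y)" by (simp add: leib)
  also have "\<dots> = x * br y z + br x z * y"
    using antisym[of y z] antisym[of x z] by (simp add: algebra_simps)
  finally show ?thesis .
qed

lemma prod4: "br (x * y) (z * w) = x * z * br y w + x * br y z * w + z * br x w * y + br x z * w * y"
  by (simp add: leibL leib algebra_simps)

end

lemma sum_if_out: "(\<Sum>e\<in>S. if C then G e else 0) = (if C then sum G S else (0::'b::comm_monoid_add))"
  by simp

lemma restr:
  assumes "k + l \<le> (r::nat)"
  shows "(\<Sum>i\<in>{0..r-k}. if i + k \<le> r - l then F i else 0) = (\<Sum>i\<in>{0..r-(k+l)}. F i :: 'b::comm_monoid_add)"
proof -
  have "(\<Sum>i\<in>{0..r-k}. if i + k \<le> r - l then F i else 0) = (\<Sum>i\<in>{0..r-k}. if i \<in> {i. i + k \<le> r - l} then F i else 0)"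
    by simp
  also have "\<dots> = sum F ({0..r-k} \<inter> {i. i + k \<le> r - l})"
    by (rule sum.inter_restrict[symmetric]) simp
  also have "{0..r-k} \<inter> {i. i + k \<le> r - l} = {0..r-(k+l)}" using assms by auto
  finally show ?thesis .
qed

lemma rhs_val:
  fixes X :: "'a::comm_ring_1 mat"
  assumes "a < m" "b < m" "c < m" "d < m"
  shows "tens_comm m perm_op (tens_prod X mat_id) a b c d = (if a = d then X c b else 0) - (if c = b then X a d else 0)"
proof -
  have s1: "(\<Sum>e<m. \<Sum>f<m. perm_op a e c f * tens_prod X mat_id e b f d) = (if a = d then X c b else 0)"
  proof -
    have "(\<Sum>e<m. \<Sum>f<m. perm_op a e c f * tens_prod X mat_id e b f d)
       = (\<Sum>e<m. \<Sum>f<m. if e = c then (if f = a then (if a = d then X c b else 0) else 0) else 0)"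
      unfolding perm_op_def tens_prod_def mat_id_def by (intro sum.cong refl) auto
    also have "\<dots> = (if a = d then X c b else 0)" using assms by (simp add: sum_if_out cong: sum.cong_simp)
    finally show ?thesis .
  qed
  have s2: "(\<Sum>e<m. \<Sum>f<m. tens_prod X mat_id a e c f * perm_op e b f d) = (if c = b then X a d else 0)"
  proof -
    have "(\<Sum>e<m. \<Sum>f<m. tens_prod X mat_id a e c f * perm_op e b f d)
       = (\<Sum>e<m. \<Sum>f<m. if e = d then (if f = b then (if c = b then X a d else 0) else 0) else 0)"
      unfolding perm_op_def tens_prod_def mat_id_def by (intro sum.cong refl) auto
    also have "\<dots> = (if c = b then X a d else 0)" using assms by (simp add: sum_if_out cong: sum.cong_simp)
    finally show ?thesis .
  qed
  show ?thesis unfolding tens_comm_def tens_mult_def s1 s2 ..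
qed

theorem theorem2p5:
  fixes br :: "'a::comm_ring_1 \<Rightarrow> 'a \<Rightarrow> 'a"
    and m r :: nat
    and Q P :: "nat \<Rightarrow> 'a mat"
  assumes "is_poisson_bracket br"
    and "\<And>i j. i \<le> r \<Longrightarrow> j \<le> r \<Longrightarrow>
           tens_eq m (tens_bracket br (P i) (Q j)) (if i = j then perm_op else (\<lambda>_ _ _ _. 0))"
    and "\<And>i j. i \<le> r \<Longrightarrow> j \<le> r \<Longrightarrow> tens_eq m (tens_bracket br (P i) (P j)) (\<lambda>_ _ _ _. 0)"
    and "\<And>i j. i \<le> r \<Longrightarrow> j \<le> r \<Longrightarrow> tens_eq m (tens_bracket br (Q i) (Q j)) (\<lambda>_ _ _ _. 0)"
    and "k \<le> r" and "l \<le> r"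
  shows "tens_eq m (tens_bracket br (A_mat m r Q P k) (A_mat m r Q P l))
           (if k + l \<le> r
            then (\<lambda>a b c d. - tens_comm m perm_op (tens_prod (A_mat m r Q P (k + l)) mat_id) a b c d)
            else (\<lambda>_ _ _ _. 0))"
proof -
  interpret pbr br by (rule pbr.intro) (rule assms(1))
  have PQ: "br (P i x y) (Q j u v) = (if i = j \<and> u = y \<and> v = x then 1 else 0)"
    if "i \<le> r" "j \<le> r" "x < m" "y < m" "u < m" "v < m" for i j x y u v
    using assms(2)[OF that(1,2)] that unfolding tens_eq_def tens_bracket_def perm_op_def
    by (cases "i = j") auto
  have QP: "br (Q j u v) (P i x y) = - (if i = j \<and> u = y \<and> v = x then 1 else 0)"
    if "i \<le> r" "j \<le> r" "x < m" "y < m" "u < m" "v < m" for i j x y u v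
    using PQ[OF that] antisym[of "Q j u v" "P i x y"] by simp
  have PP: "br (P i x y) (P j u v) = 0"
    if "i \<le> r" "j \<le> r" "x < m" "y < m" "u < m" "v < m" for i j x y u v
    using assms(3)[OF that(1,2)] that unfolding tens_eq_def tens_bracket_def by auto
  have QQ: "br (Q i x y) (Q j u v) = 0"
    if "i \<le> r" "j \<le> r" "x < m" "y < m" "u < m" "v < m" for i j x y u v
    using assms(4)[OF that(1,2)] that unfolding tens_eq_def tens_bracket_def by auto
  show ?thesis
    unfolding tens_eq_def
  proof (intro allI impI)
    fix a b c d assume ab: "a < m" "b < m" and cd: "c < m" "d < m"
    define T1 where "T1 = (\<lambda>i e j f. if f = e then (if j = i + k then (if c = b then Q i a e * P (j + l) e d else 0) else 0) else (0::'a))"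
    define T2 where "T2 = (\<lambda>i e j f. if f = e then (if i = j + l then (if d = a then Q j c e * P (i + k) e b else 0) else 0) else (0::'a))"
    have key: "br (Q i a e * P (i + k) e b) (Q j c f * P (j + l) f d) = T1 i e j f - T2 i e j f"
      if "i \<in> {0..r-k}" "e \<in> {..<m}" "j \<in> {0..r-l}" "f \<in> {..<m}" for i e j f
    proof -
      have r: "i \<le> r" "i + k \<le> r" "j \<le> r" "j + l \<le> r" "e < m" "f < m" using that assms(5,6) by auto
      show ?thesis
        unfolding prod4 T1_def T2_def
        using r ab cd
        by (simp add: PQ QP PP QQ)
    qed
    have "br (A_mat m r Q P k a b) (A_mat m r Q P l c d) =
      (\<Sum>i\<in>{0..r-k}. \<Sum>e<m. \<Sum>j\<in>{0..r-l}. \<Sum>f<m. br (Q i a e * P (i + k) e b) (Q j c f * P (j + l) f d))"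
      unfolding A_mat_def mat_mult_def by (simp only: sumL, simp only: sumR)
    also have "\<dots> = (\<Sum>i\<in>{0..r-k}. \<Sum>e<m. \<Sum>j\<in>{0..r-l}. \<Sum>f<m. T1 i e j f - T2 i e j f)"
      by (intro sum.cong refl) (simp add: key)
    also have "\<dots> = (\<Sum>i\<in>{0..r-k}. \<Sum>e<m. \<Sum>j\<in>{0..r-l}. \<Sum>f<m. T1 i e j f)
                  - (\<Sum>i\<in>{0..r-k}. \<Sum>e<m. \<Sum>j\<in>{0..r-l}. \<Sum>f<m. T2 i e j f)"
      by (simp add: sum_subtractf)
    finally have L: "br (A_mat m r Q P k a b) (A_mat m r Q P l c d) =
      (\<Sum>i\<in>{0..r-k}. \<Sum>e<m. \<Sum>j\<in>{0..r-l}. \<Sum>f<m. T1 i e j f)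
                  - (\<Sum>i\<in>{0..r-k}. \<Sum>e<m. \<Sum>j\<in>{0..r-l}. \<Sum>f<m. T2 i e j f)" .
    have S1: "(\<Sum>i\<in>{0..r-k}. \<Sum>e<m. \<Sum>j\<in>{0..r-l}. \<Sum>f<m. T1 i e j f)
       = (\<Sum>i\<in>{0..r-k}. \<Sum>e<m. if i + k \<le> r - l then (if c = b then Q i a e * P (i + k + l) e d else 0) else 0)"
      unfolding T1_def by (simp cong: sum.cong_simp)
    have "(\<Sum>i\<in>{0..r-k}. \<Sum>e<m. \<Sum>j\<in>{0..r-l}. \<Sum>f<m. T2 i e j f)
       = (\<Sum>i\<in>{0..r-k}. \<Sum>e<m. \<Sum>j\<in>{0..r-l}. if i = j + l then (if d = a then Q j c e * P (i + k) e b else 0) else 0)"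
      unfolding T2_def by (simp cong: sum.cong_simp)
    also have "\<dots> = (\<Sum>i\<in>{0..r-k}. \<Sum>j\<in>{0..r-l}. \<Sum>e<m. if i = j + l then (if d = a then Q j c e * P (i + k) e b else 0) else 0)"
      by (rule sum.cong[OF refl], rule sum.swap)
    also have "\<dots> = (\<Sum>j\<in>{0..r-l}. \<Sum>i\<in>{0..r-k}. \<Sum>e<m. if i = j + l then (if d = a then Q j c e * P (i + k) e b else 0) else 0)"
      by (rule sum.swap)
    also have "\<dots> = (\<Sum>j\<in>{0..r-l}. \<Sum>e<m. \<Sum>i\<in>{0..r-k}. if i = j + l then (if d = a then Q j c e * P (i + k) e b else 0) else 0)"
      by (rule sum.cong[OF refl], rule sum.swap)
    also have "\<dots> = (\<Sum>j\<in>{0..r-l}. \<Sum>e<m. if j + l \<le> r - k then (if d = a then Q j c e * P (j + l + k) e b else 0) else 0)"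
      by (simp cong: sum.cong_simp)
    finally have S2: "(\<Sum>i\<in>{0..r-k}. \<Sum>e<m. \<Sum>j\<in>{0..r-l}. \<Sum>f<m. T2 i e j f)
       = (\<Sum>j\<in>{0..r-l}. \<Sum>e<m. if j + l \<le> r - k then (if d = a then Q j c e * P (j + l + k) e b else 0) else 0)" .
    show "tens_bracket br (A_mat m r Q P k) (A_mat m r Q P l) a b c d = (if k + l \<le> r
            then (\<lambda>a b c d. - tens_comm m perm_op (tens_prod (A_mat m r Q P (k + l)) mat_id) a b c d)
            else (\<lambda>_ _ _ _. 0)) a b c d"
    proof (cases "k + l \<le> r")
      case True
      have A1: "(\<Sum>i\<in>{0..r-k}. \<Sum>e<m. if i + k \<le> r - l then (if c = b then Q i a e * P (i + k + l) e d else 0) else 0)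
         = (if c = b then A_mat m r Q P (k + l) a d else 0)"
        unfolding sum_if_out restr[OF True] A_mat_def mat_mult_def
        by (simp add: add.assoc)
      have A2: "(\<Sum>j\<in>{0..r-l}. \<Sum>e<m. if j + l \<le> r - k then (if d = a then Q j c e * P (j + l + k) e b else 0) else 0)
         = (if d = a then A_mat m r Q P (k + l) c b else 0)"
        unfolding sum_if_out restr[of l k r, simplified add.commute[of l k], OF True] A_mat_def mat_mult_def
        by (simp add: add.assoc add.commute[of l k])
      show ?thesis using True
        unfolding tens_bracket_def L S1 S2 A1 A2 by (simp add: rhs_val[OF ab cd])
    next
      case False
      have z1: "\<not> i + k \<le> r - l" for i using False assms(6) by arith
      have z2: "\<not> j + l \<le> r - k" for j using False assms(5) by arith
      show ?thesis using False
        unfolding tens_bracket_def L S1 S2 by (simp add: z1 z2)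
    qed
  qed
qed

end
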